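(* Let $(H,B_1,B_2)$ be a Rota-Baxter system of Hopf algebras with descendent Hopf algebra $H_{B_1,B_2}$, let $A$ be a unital commutative algebra, and let $\mathcal{B}_1,\mathcal{B}_2:\mathrm{Char}(H,A)\to\mathrm{Char}(H_{B_1,B_2},A)$ be given by $\mathcal{B}_i(f)(a)=f(B_i(a))$, $a\in H_1$. Then $\mathcal{B}_1(\ker\mathcal{B}_2)$ is a normal subgroup of $\operatorname{Im}(\mathcal{B}_1)$ and $\mathcal{B}_2(\ker\mathcal{B}_1)$ is a normal subgroup of $\operatorname{Im}(\mathcal{B}_2)$.
   Context: $\mathbb{F}$ is a field of characteristic $0$; Sweedler notation $\Delta(a)=a_1\otimes a_2$. A Rota-Baxter system of Hopf algebras is a triple $(H,B_1,B_2)$ with $(H,\cdot,1,\Delta,\epsilon,S)$ a cocommutative Hopf algebra, $B_1,B_2$ coalgebra homomorphisms with $B_1(1)=B_2(1)=1$, and for all $a,b\in H$: $B_1(a)B_1(b)=B_1(B_1(a_1)bS(B_2(a_2)))$, $B_2(a)B_2(b)=B_2(B_1(a_1)bS(B_2(a_2)))$. Descendent operation $a\circ b=B_1(a_1)bS(B_2(a_2))$, cocycle $\sigma(a)=B_1(a_1)S(B_2(a_2))$, $H_1=\operatorname{Im}(\sigma)$; $H_{B_1,B_2}$ is the Hopf algebra $H_1$ with product $\circ$, unit $1$, restricted $\Delta,\epsilon$, antipode $T(a)=S(B_1(a_1))B_2(a_2)$. Convolution: $(f\ast g)(a)=f(a_1)g(a_2)$. $\mathrm{Char}(H,A)$ is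 the group under $\ast$ of algebra homomorphisms $H\to A$; $\mathrm{Char}(H_{B_1,B_2},A)$ is the group under convolution (w.r.t. the coproduct of $H_1$) of algebra homomorphisms $(H_1,\circ,1)\to A$. *)

theory Defs
  imports Main "HOL.Vector_Spaces" "HOL-Algebra.Coset"
begin

text \<open>
Since Isabelle/HOL has no tensor products,
an element of H (x) H is represented by a finite list of pairs (u,v), standing for the
sum of the u (x) v; two such lists represent the same tensor iff every 'k-valued
bilinear form takes the same value on them (this characterises equality in H (x) H over
a field).  Similarly for H (x) H (x) H with trilinear forms.  The coproduct is a map
Delta from H to such lists, and Sweedler sums f(a_1,a_2) are sums over the list Delta a.
\<close>

definition bilinear_form :: "('k::field \<Rightarrow> 'h::ab_group_add \<Rightarrow> 'h) \<Rightarrow> ('h \<Rightarrow> 'h \<Rightarrow> 'k) \<Rightarrow> bool" where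
  "bilinear_form sc \<beta> \<longleftrightarrow>
     (\<forall>x. Vector_Spaces.linear sc (*) (\<beta> x)) \<and> (\<forall>y. Vector_Spaces.linear sc (*) (\<lambda>x. \<beta> x y))"

definition trilinear_form :: "('k::field \<Rightarrow> 'h::ab_group_add \<Rightarrow> 'h) \<Rightarrow> ('h \<Rightarrow> 'h \<Rightarrow> 'h \<Rightarrow> 'k) \<Rightarrow> bool" where
  "trilinear_form sc \<tau> \<longleftrightarrow>
     (\<forall>x y. Vector_Spaces.linear sc (*) (\<tau> x y)) \<and> (\<forall>x z. Vector_Spaces.linear sc (*) (\<lambda>y. \<tau> x y z))
     \<and> (\<forall>y z. Vector_Spaces.linear sc (*) (\<lambda>x. \<tau> x y z))"

definition tensor2_eq :: "('k::field \<Rightarrow> 'h::ab_group_add \<Rightarrow> 'h) \<Rightarrow> ('h \<times> 'h) list \<Rightarrow> ('h \<times> 'h) list \<Rightarrow> bool" where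
  "tensor2_eq sc xs ys \<longleftrightarrow>
     (\<forall>\<beta>. bilinear_form sc \<beta> \<longrightarrow> sum_list (map (\<lambda>(u,v). \<beta> u v) xs) = sum_list (map (\<lambda>(u,v). \<beta> u v) ys))"

definition tensor3_eq :: "('k::field \<Rightarrow> 'h::ab_group_add \<Rightarrow> 'h) \<Rightarrow> ('h \<times> 'h \<times> 'h) list \<Rightarrow> ('h \<times> 'h \<times> 'h) list \<Rightarrow> bool" where
  "tensor3_eq sc xs ys \<longleftrightarrow>
     (\<forall>\<tau>. trilinear_form sc \<tau> \<longrightarrow> sum_list (map (\<lambda>(u,v,w). \<tau> u v w) xs) = sum_list (map (\<lambda>(u,v,w). \<tau> u v w) ys))"

definition is_algebra :: "('k::field \<Rightarrow> 'h::ring_1 \<Rightarrow> 'h) \<Rightarrow> bool" where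
  "is_algebra sc \<longleftrightarrow> vector_space sc \<and>
     (\<forall>c x y. sc c (x * y) = sc c x * y \<and> sc c (x * y) = x * sc c y)"

definition cocomm_hopf_algebra ::
  "('k::field_char_0 \<Rightarrow> 'h::ring_1 \<Rightarrow> 'h) \<Rightarrow> ('h \<Rightarrow> ('h \<times> 'h) list) \<Rightarrow> ('h \<Rightarrow> 'k) \<Rightarrow> ('h \<Rightarrow> 'h) \<Rightarrow> bool" where
  "cocomm_hopf_algebra sc \<Delta> \<epsilon> S \<longleftrightarrow>
     is_algebra sc
   \<comment> \<open>coproduct is linear\<close>
   \<and> (\<forall>x y. tensor2_eq sc (\<Delta> (x + y)) (\<Delta> x @ \<Delta> y))
   \<and> (\<forall>c x. tensor2_eq sc (\<Delta> (sc c x)) (map (\<lambda>(u,v). (sc c u, v)) (\<Delta> x)))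
   \<comment> \<open>coassociativity\<close>
   \<and> (\<forall>x. tensor3_eq sc
          (concat (map (\<lambda>(u,v). map (\<lambda>(u1,u2). (u1,u2,v)) (\<Delta> u)) (\<Delta> x)))
          (concat (map (\<lambda>(u,v). map (\<lambda>(v1,v2). (u,v1,v2)) (\<Delta> v)) (\<Delta> x))))
   \<comment> \<open>counit\<close>
   \<and> Vector_Spaces.linear sc (*) \<epsilon>
   \<and> (\<forall>x. sum_list (map (\<lambda>(u,v). sc (\<epsilon> u) v) (\<Delta> x)) = x)
   \<and> (\<forall>x. sum_list (map (\<lambda>(u,v). sc (\<epsilon> v) u) (\<Delta> x)) = x)
   \<comment> \<open>bialgebra compatibility\<close>
   \<and> (\<forall>x y. tensor2_eq sc (\<Delta> (x * y))
            (concat (map (\<lambda>(u,v). map (\<lambda>(u',v'). (u * u', v * v')) (\<Delta> y)) (\<Delta> x))))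
   \<and> tensor2_eq sc (\<Delta> 1) [(1,1)]
   \<and> (\<forall>x y. \<epsilon> (x * y) = \<epsilon> x * \<epsilon> y) \<and> \<epsilon> 1 = 1
   \<comment> \<open>antipode\<close>
   \<and> Vector_Spaces.linear sc sc S
   \<and> (\<forall>x. sum_list (map (\<lambda>(u,v). S u * v) (\<Delta> x)) = sc (\<epsilon> x) 1)
   \<and> (\<forall>x. sum_list (map (\<lambda>(u,v). u * S v) (\<Delta> x)) = sc (\<epsilon> x) 1)
   \<comment> \<open>cocommutativity\<close>
   \<and> (\<forall>x. tensor2_eq sc (\<Delta> x) (map prod.swap (\<Delta> x)))"

definition coalgebra_hom ::
  "('k::field \<Rightarrow> 'h::ring_1 \<Rightarrow> 'h) \<Rightarrow> ('h \<Rightarrow> ('h \<times> 'h) list) \<Rightarrow> ('h \<Rightarrow> 'k) \<Rightarrow> ('h \<Rightarrow> 'h) \<Rightarrow> bool" where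
  "coalgebra_hom sc \<Delta> \<epsilon> B \<longleftrightarrow>
     Vector_Spaces.linear sc sc B
   \<and> (\<forall>x. tensor2_eq sc (\<Delta> (B x)) (map (\<lambda>(u,v). (B u, B v)) (\<Delta> x)))
   \<and> (\<forall>x. \<epsilon> (B x) = \<epsilon> x)"

definition desc_op :: "('h \<Rightarrow> ('h \<times> 'h) list) \<Rightarrow> ('h \<Rightarrow> 'h) \<Rightarrow> ('h \<Rightarrow> 'h) \<Rightarrow> ('h \<Rightarrow> 'h) \<Rightarrow> 'h::ring_1 \<Rightarrow> 'h \<Rightarrow> 'h" where
  "desc_op \<Delta> S B1 B2 a b = sum_list (map (\<lambda>(u,v). B1 u * b * S (B2 v)) (\<Delta> a))"

definition cocycle :: "('h \<Rightarrow> ('h \<times> 'h) list) \<Rightarrow> ('h \<Rightarrow> 'h) \<Rightarrow> ('h \<Rightarrow> 'h) \<Rightarrow> ('h \<Rightarrow> 'h) \<Rightarrow> 'h::ring_1 \<Rightarrow> 'h" where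
  "cocycle \<Delta> S B1 B2 a = sum_list (map (\<lambda>(u,v). B1 u * S (B2 v)) (\<Delta> a))"

definition H1 :: "('h \<Rightarrow> ('h \<times> 'h) list) \<Rightarrow> ('h \<Rightarrow> 'h) \<Rightarrow> ('h \<Rightarrow> 'h) \<Rightarrow> ('h \<Rightarrow> 'h) \<Rightarrow> 'h::ring_1 set" where
  "H1 \<Delta> S B1 B2 = range (cocycle \<Delta> S B1 B2)"

definition rota_baxter_system ::
  "('k::field_char_0 \<Rightarrow> 'h::ring_1 \<Rightarrow> 'h) \<Rightarrow> ('h \<Rightarrow> ('h \<times> 'h) list) \<Rightarrow> ('h \<Rightarrow> 'k) \<Rightarrow> ('h \<Rightarrow> 'h)
    \<Rightarrow> ('h \<Rightarrow> 'h) \<Rightarrow> ('h \<Rightarrow> 'h) \<Rightarrow> bool" where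
  "rota_baxter_system sc \<Delta> \<epsilon> S B1 B2 \<longleftrightarrow>
     cocomm_hopf_algebra sc \<Delta> \<epsilon> S
   \<and> coalgebra_hom sc \<Delta> \<epsilon> B1 \<and> coalgebra_hom sc \<Delta> \<epsilon> B2
   \<and> B1 1 = 1 \<and> B2 1 = 1
   \<and> (\<forall>a b. B1 a * B1 b = B1 (desc_op \<Delta> S B1 B2 a b))
   \<and> (\<forall>a b. B2 a * B2 b = B2 (desc_op \<Delta> S B1 B2 a b))"

definition comm_algebra :: "('k::field \<Rightarrow> 'a::comm_ring_1 \<Rightarrow> 'a) \<Rightarrow> bool" where
  "comm_algebra scA \<longleftrightarrow> vector_space scA \<and> (\<forall>c x y. scA c (x * y) = scA c x * y)"

definition Char_H ::
  "('k::field \<Rightarrow> 'h::ring_1 \<Rightarrow> 'h) \<Rightarrow> ('h \<Rightarrow> ('h \<times> 'h) list) \<Rightarrow> ('h \<Rightarrow> 'k)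
    \<Rightarrow> ('k \<Rightarrow> 'a::comm_ring_1 \<Rightarrow> 'a) \<Rightarrow> ('h \<Rightarrow> 'a) monoid" where
  "Char_H sc \<Delta> \<epsilon> scA =
     \<lparr> carrier = {f. Vector_Spaces.linear sc scA f \<and> f 1 = 1 \<and> (\<forall>x y. f (x * y) = f x * f y)},
       mult = (\<lambda>f g x. sum_list (map (\<lambda>(u,v). f u * g v) (\<Delta> x))),
       one = (\<lambda>x. scA (\<epsilon> x) 1) \<rparr>"

text \<open>The group Char(H_{B1,B2},A): algebra homomorphisms (H1, o, 1) -> A, represented as
  functions that are extensional on H1 (value undefined outside H1).  The convolution uses
  the coproduct of H1: for a in H1 a representation of Delta a by pairs from H1 x H1.\<close>
definition Char_desc ::
  "('k::field_char_0 \<Rightarrow> 'h::ring_1 \<Rightarrow> 'h) \<Rightarrow> ('h \<Rightarrow> ('h \<times> 'h) list) \<Rightarrow> ('h \<Rightarrow> 'k) \<Rightarrow> ('h \<Rightarrow> 'h)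
    \<Rightarrow> ('h \<Rightarrow> 'h) \<Rightarrow> ('h \<Rightarrow> 'h) \<Rightarrow> ('k \<Rightarrow> 'a::comm_ring_1 \<Rightarrow> 'a) \<Rightarrow> ('h \<Rightarrow> 'a) monoid" where
  "Char_desc sc \<Delta> \<epsilon> S B1 B2 scA =
     (let K = H1 \<Delta> S B1 B2 in
     \<lparr> carrier = {f. f \<in> extensional K
                    \<and> (\<forall>x\<in>K. \<forall>y\<in>K. f (x + y) = f x + f y)
                    \<and> (\<forall>c. \<forall>x\<in>K. f (sc c x) = scA c (f x))
                    \<and> f 1 = 1
                    \<and> (\<forall>x\<in>K. \<forall>y\<in>K. f (desc_op \<Delta> S B1 B2 x y) = f x * f y)},
       mult = (\<lambda>f g. restrict (\<lambda>x. sum_list (map (\<lambda>(u,v). f u * g v)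
                         (SOME xs. set xs \<subseteq> K \<times> K \<and> tensor2_eq sc (\<Delta> x) xs))) K),
       one = restrict (\<lambda>x. scA (\<epsilon> x) 1) K \<rparr>)"

definition char_map :: "('h \<Rightarrow> 'h) \<Rightarrow> 'h set \<Rightarrow> ('h \<Rightarrow> 'a) \<Rightarrow> ('h \<Rightarrow> 'a)" where
  "char_map B K f = restrict (\<lambda>a. f (B a)) K"

end

theory Submission
  imports Defs
begin

lemma image_group:
  fixes G :: "('a, 'm) monoid_scheme" and G' :: "('b, 'n) monoid_scheme"
  assumes G: "group G"
    and hom: "\<And>x y. x \<in> carrier G \<Longrightarrow> y \<in> carrier G \<Longrightarrow> \<phi> (x \<otimes>\<^bsub>G\<^esub> y) = \<phi> x \<otimes>\<^bsub>G'\<^esub> \<phi> y"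
    and one: "\<phi> \<one>\<^bsub>G\<^esub> = \<one>\<^bsub>G'\<^esub>"
  shows "group (G'\<lparr>carrier := \<phi> ` carrier G\<rparr>)"
    and "group_hom G (G'\<lparr>carrier := \<phi> ` carrier G\<rparr>) \<phi>"
proof -
  interpret G: group G by (rule G)
  show gr: "group (G'\<lparr>carrier := \<phi> ` carrier G\<rparr>)"
  proof (rule groupI, simp_all)
    fix x y assume "x \<in> \<phi> ` carrier G" "y \<in> \<phi> ` carrier G"
    then show "x \<otimes>\<^bsub>G'\<^esub> y \<in> \<phi> ` carrier G"
      by (auto simp flip: hom)
  next
    show "\<one>\<^bsub>G'\<^esub> \<in> \<phi> ` carrier G" using one G.one_closed by (metis image_eqI)
  next
    fix x y z assume "x \<in> \<phi> ` carrier G" "y \<in> \<phi> ` carrier G" "z \<in> \<phi> ` carrier G"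
    then show "x \<otimes>\<^bsub>G'\<^esub> y \<otimes>\<^bsub>G'\<^esub> z = x \<otimes>\<^bsub>G'\<^esub> (y \<otimes>\<^bsub>G'\<^esub> z)"
      by (auto simp flip: hom simp: G.m_assoc)
  next
    fix x assume "x \<in> \<phi> ` carrier G"
    then show "\<one>\<^bsub>G'\<^esub> \<otimes>\<^bsub>G'\<^esub> x = x"
      by (auto simp flip: hom one)
  next
    fix x assume "x \<in> \<phi> ` carrier G"
    then obtain a where a: "a \<in> carrier G" "x = \<phi> a" by auto
    have "\<phi> (inv\<^bsub>G\<^esub> a) \<otimes>\<^bsub>G'\<^esub> x = \<one>\<^bsub>G'\<^esub>"
      using a by (simp add: hom[symmetric] one[symmetric])
    then show "\<exists>y\<in>carrier G. \<phi> y \<otimes>\<^bsub>G'\<^esub> x = \<one>\<^bsub>G'\<^esub>"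
      using a G.inv_closed by blast
  qed
  show "group_hom G (G'\<lparr>carrier := \<phi> ` carrier G\<rparr>) \<phi>"
    unfolding group_hom_def group_hom_axioms_def
    using G gr by (auto simp: hom_def hom)
qed

lemma abstract_normal:
  fixes G :: "('a, 'm) monoid_scheme" and G' :: "('b, 'n) monoid_scheme"
  assumes G: "group G"
    and hom1: "\<And>x y. x \<in> carrier G \<Longrightarrow> y \<in> carrier G \<Longrightarrow> \<phi>1 (x \<otimes>\<^bsub>G\<^esub> y) = \<phi>1 x \<otimes>\<^bsub>G'\<^esub> \<phi>1 y"
    and one1: "\<phi>1 \<one>\<^bsub>G\<^esub> = \<one>\<^bsub>G'\<^esub>"
    and hom2: "\<And>x y. x \<in> carrier G \<Longrightarrow> y \<in> carrier G \<Longrightarrow> \<phi>2 (x \<otimes>\<^bsub>G\<^esub> y) = \<phi>2 x \<otimes>\<^bsub>G'\<^esub> \<phi>2 y"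
    and one2: "\<phi>2 \<one>\<^bsub>G\<^esub> = \<one>\<^bsub>G'\<^esub>"
  shows "\<phi>1 ` kernel G G' \<phi>2 \<lhd> G'\<lparr>carrier := \<phi>1 ` carrier G\<rparr>"
proof -
  let ?G1 = "G'\<lparr>carrier := \<phi>1 ` carrier G\<rparr>"
  let ?G2 = "G'\<lparr>carrier := \<phi>2 ` carrier G\<rparr>"
  interpret G: group G by (rule G)
  interpret h1: group_hom G ?G1 \<phi>1 using image_group[OF G hom1 one1] by blast
  interpret h2: group_hom G ?G2 \<phi>2 using image_group[OF G hom2 one2] by blast
  have ker: "kernel G G' \<phi>2 = kernel G ?G2 \<phi>2" by (simp add: kernel_def)
  have N: "kernel G G' \<phi>2 \<lhd> G" using h2.normal_kernel ker by simp
  have sub: "subgroup (\<phi>1 ` kernel G G' \<phi>2) ?G1"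
    using h1.subgroup_img_is_subgroup N normal_imp_subgroup by blast
  show ?thesis
  proof (subst h1.H.normal_inv_iff, intro conjI sub ballI)
    fix x h assume x: "x \<in> carrier ?G1" and h: "h \<in> \<phi>1 ` kernel G G' \<phi>2"
    obtain a where a: "a \<in> carrier G" "x = \<phi>1 a" using x by auto
    obtain k where k: "k \<in> kernel G G' \<phi>2" "h = \<phi>1 k" using h by auto
    have kc: "k \<in> carrier G" using k by (simp add: kernel_def)
    have "x \<otimes>\<^bsub>?G1\<^esub> h \<otimes>\<^bsub>?G1\<^esub> inv\<^bsub>?G1\<^esub> x = \<phi>1 (a \<otimes>\<^bsub>G\<^esub> k \<otimes>\<^bsub>G\<^esub> inv\<^bsub>G\<^esub> a)"
      using a k kc by (simp add: h1.hom_mult h1.hom_inv)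
    moreover have "a \<otimes>\<^bsub>G\<^esub> k \<otimes>\<^bsub>G\<^esub> inv\<^bsub>G\<^esub> a \<in> kernel G G' \<phi>2"
      using N a k by (simp add: G.normal_inv_iff)
    ultimately show "x \<otimes>\<^bsub>?G1\<^esub> h \<otimes>\<^bsub>?G1\<^esub> inv\<^bsub>?G1\<^esub> x \<in> \<phi>1 ` kernel G G' \<phi>2" by simp
  qed
qed

definition lin :: "('k::field \<Rightarrow> 'a::ab_group_add \<Rightarrow> 'a) \<Rightarrow> ('k \<Rightarrow> 'b::ab_group_add \<Rightarrow> 'b) \<Rightarrow> ('a \<Rightarrow> 'b) \<Rightarrow> bool" where
  "lin s1 s2 f \<longleftrightarrow> (\<forall>x y. f (x + y) = f x + f y) \<and> (\<forall>c x. f (s1 c x) = s2 c (f x))"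

definition bil :: "('k::field \<Rightarrow> 'a::ab_group_add \<Rightarrow> 'a) \<Rightarrow> ('k \<Rightarrow> 'b::ab_group_add \<Rightarrow> 'b) \<Rightarrow> ('a \<Rightarrow> 'a \<Rightarrow> 'b) \<Rightarrow> bool" where
  "bil s1 s2 \<beta> \<longleftrightarrow> (\<forall>u. lin s1 s2 (\<beta> u)) \<and> (\<forall>v. lin s1 s2 (\<lambda>u. \<beta> u v))"

definition tri :: "('k::field \<Rightarrow> 'a::ab_group_add \<Rightarrow> 'a) \<Rightarrow> ('k \<Rightarrow> 'b::ab_group_add \<Rightarrow> 'b) \<Rightarrow> ('a \<Rightarrow> 'a \<Rightarrow> 'a \<Rightarrow> 'b) \<Rightarrow> bool" where
  "tri s1 s2 \<tau> \<longleftrightarrow> (\<forall>u v. lin s1 s2 (\<tau> u v)) \<and> (\<forall>u w. lin s1 s2 (\<lambda>v. \<tau> u v w)) \<and> (\<forall>v w. lin s1 s2 (\<lambda>u. \<tau> u v w))"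

definition swp :: "('h \<Rightarrow> ('h \<times> 'h) list) \<Rightarrow> ('h \<Rightarrow> 'h \<Rightarrow> 'v::comm_monoid_add) \<Rightarrow> 'h \<Rightarrow> 'v" where
  "swp \<Delta> \<beta> x = sum_list (map (\<lambda>(u,v). \<beta> u v) (\<Delta> x))"

definition alg :: "('k::field \<Rightarrow> 'a::ring \<Rightarrow> 'a) \<Rightarrow> bool" where
  "alg s \<longleftrightarrow> (\<forall>c x y. s c (x * y) = s c x * y \<and> s c (x * y) = x * s c y)"

lemma linD: "lin s1 s2 f \<Longrightarrow> f (x + y) = f x + f y" "lin s1 s2 f \<Longrightarrow> f (s1 c x) = s2 c (f x)"
  by (auto simp: lin_def)

lemma addv_zero:
  fixes g :: "'a::ab_group_add \<Rightarrow> 'b::ab_group_add"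
  shows "(\<And>a b. g (a + b) = g a + g b) \<Longrightarrow> g 0 = 0"
proof -
  assume h: "\<And>a b. g (a + b) = g a + g b"
  have "g (0 + 0) = g 0 + g 0" by (rule h)
  then have "g 0 = g 0 + g 0" by (simp only: add_0_left)
  then show ?thesis by (metis add_left_cancel add_0_right)
qed

lemma lin_zero: "lin s1 s2 f \<Longrightarrow> f 0 = 0"
  by (rule addv_zero) (simp add: lin_def)

lemma addv_sum_list:
  fixes g :: "'a::ab_group_add \<Rightarrow> 'b::ab_group_add"
  assumes "\<And>a b. g (a + b) = g a + g b"
  shows "g (sum_list (map h xs)) = sum_list (map (\<lambda>x. g (h x)) xs)"
  by (induction xs) (auto simp: assms addv_zero[of g, OF assms])

lemma lin_sum_list: "lin s1 s2 f \<Longrightarrow> f (sum_list (map h xs)) = sum_list (map (\<lambda>x. f (h x)) xs)"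
  by (rule addv_sum_list) (auto simp: lin_def)

lemma addv_diff:
  fixes g :: "'a::ab_group_add \<Rightarrow> 'b::ab_group_add"
  assumes "\<And>a b. g (a + b) = g a + g b"
  shows "g (a - b) = g a - g b"
proof -
  have "g a = g (a - b) + g b" using assms[of "a - b" b] by simp
  then show ?thesis by (simp add: algebra_simps)
qed

lemma swp_addv:
  fixes g :: "'a::ab_group_add \<Rightarrow> 'b::ab_group_add"
  assumes "\<And>a b. g (a + b) = g a + g b"
  shows "g (swp \<Delta> \<beta> x) = swp \<Delta> (\<lambda>u v. g (\<beta> u v)) x"
  unfolding swp_def by (subst addv_sum_list[OF assms]) (auto intro!: arg_cong[where f=sum_list])

lemma swp_lin: "lin s1 s2 g \<Longrightarrow> g (swp \<Delta> \<beta> x) = swp \<Delta> (\<lambda>u v. g (\<beta> u v)) x"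
  by (rule swp_addv) (auto simp: lin_def)

lemma swp_plus: "swp \<Delta> (\<lambda>u v. \<beta> u v + \<gamma> u v) x = swp \<Delta> \<beta> x + swp \<Delta> \<gamma> x"
proof -
  have "\<And>xs. sum_list (map (\<lambda>(u,v). \<beta> u v + \<gamma> u v) xs) = sum_list (map (\<lambda>(u,v). \<beta> u v) xs) + sum_list (map (\<lambda>(u,v). \<gamma> u v) xs)"
    by (induct_tac xs) (auto simp: algebra_simps)
  then show ?thesis unfolding swp_def by blast
qed

lemma swp_cong: "(\<And>u v. \<beta> u v = \<gamma> u v) \<Longrightarrow> swp \<Delta> \<beta> x = swp \<Delta> \<gamma> x"
  by (metis ext)

lemma sum_list_swap:
  fixes f :: "'a \<Rightarrow> 'b \<Rightarrow> 'c::comm_monoid_add"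
  shows
  "sum_list (map (\<lambda>a. sum_list (map (\<lambda>b. f a b) ys)) xs) =
   sum_list (map (\<lambda>b. sum_list (map (\<lambda>a. f a b) xs)) ys)"
proof (induction xs)
  case (Cons a xs)
  have "(\<Sum>b\<leftarrow>ys. f a b + (\<Sum>a\<leftarrow>xs. f a b)) = (\<Sum>b\<leftarrow>ys. f a b) + (\<Sum>b\<leftarrow>ys. \<Sum>a\<leftarrow>xs. f a b)"
    by (rule sum_list_addf)
  then show ?case using Cons by simp
qed simp

lemma swp_swap: "swp \<Delta> (\<lambda>u v. swp \<Delta>' (\<gamma> u v) y) x = swp \<Delta>' (\<lambda>u' v'. swp \<Delta> (\<lambda>u v. \<gamma> u v u' v') x) y"
  unfolding swp_def using sum_list_swap[of "\<lambda>(u,v) (u',v'). \<gamma> u v u' v'" "\<Delta>' y" "\<Delta> x"]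
  by (simp add: case_prod_beta')

lemma vs_lin_scale: "vector_space s \<Longrightarrow> lin s s (\<lambda>x. x)"
  by (simp add: lin_def)

lemma lin_compI: "lin s2 s3 g \<Longrightarrow> lin s1 s2 f \<Longrightarrow> lin s1 s3 (\<lambda>x. g (f x))"
  by (simp add: lin_def)

lemma lin_idI: "lin s s (\<lambda>x. x)"
  by (simp add: lin_def)

lemma lin_plusI: "vector_space s2 \<Longrightarrow> lin s1 s2 f \<Longrightarrow> lin s1 s2 g \<Longrightarrow> lin s1 s2 (\<lambda>x. f x + g x)"
  by (simp add: lin_def vector_space.vector_space_assms(1))

lemma lin_scaleI: "vector_space s2 \<Longrightarrow> lin s1 s2 f \<Longrightarrow> lin s1 s2 (\<lambda>x. s2 c (f x))"
  unfolding lin_def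
proof (intro conjI allI)
  assume vs: "vector_space s2" and f: "(\<forall>x y. f (x + y) = f x + f y) \<and> (\<forall>c x. f (s1 c x) = s2 c (f x))"
  interpret vector_space s2 by (rule vs)
  fix x y show "s2 c (f (x + y)) = s2 c (f x) + s2 c (f y)" using f by (simp add: scale_right_distrib)
next
  fix d x
  assume vs: "vector_space s2" and f: "(\<forall>x y. f (x + y) = f x + f y) \<and> (\<forall>c x. f (s1 c x) = s2 c (f x))"
  interpret vector_space s2 by (rule vs)
  show "s2 c (f (s1 d x)) = s2 d (s2 c (f x))" using f by (simp add: mult.commute)
qed

lemma lin_mult_rightI: "alg s2 \<Longrightarrow> lin s1 s2 f \<Longrightarrow> lin s1 s2 (\<lambda>x. f x * c)"
  by (simp add: lin_def alg_def distrib_right)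

lemma lin_mult_leftI:
  assumes a: "alg s2" and f: "lin s1 s2 f" shows "lin s1 s2 (\<lambda>x. c * f x)"
  unfolding lin_def
proof (intro conjI allI)
  fix x y show "c * f (x + y) = c * f x + c * f y" using f by (simp add: lin_def distrib_left)
next
  fix d x
  have "s2 d (c * f x) = c * s2 d (f x)" using a unfolding alg_def by blast
  then show "c * f (s1 d x) = s2 d (c * f x)" using f by (simp add: lin_def)
qed

lemma lin_swp_paramI:
  assumes "vector_space s2" "\<And>u v. lin s1 s2 (\<lambda>p. \<gamma> p u v)"
  shows "lin s1 s2 (\<lambda>p. swp \<Delta> (\<gamma> p) x)"
proof -
  interpret vector_space s2 by fact
  show ?thesis
    unfolding lin_def swp_def
  proof (intro conjI allI)
    fix a b show "(\<Sum>(u, v)\<leftarrow>\<Delta> x. \<gamma> (a + b) u v) = (\<Sum>(u, v)\<leftarrow>\<Delta> x. \<gamma> a u v) + (\<Sum>(u, v)\<leftarrow>\<Delta> x. \<gamma> b u v)"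
      using assms(2) by (simp add: lin_def case_prod_beta' sum_list_addf)
  next
    fix c a
    have "s2 c (\<Sum>(u, v)\<leftarrow>\<Delta> x. \<gamma> a u v) = (\<Sum>(u, v)\<leftarrow>\<Delta> x. s2 c (\<gamma> a u v))"
      by (subst addv_sum_list[where g="s2 c"]) (auto simp: scale_right_distrib case_prod_beta')
    then show "(\<Sum>(u, v)\<leftarrow>\<Delta> x. \<gamma> (s1 c a) u v) = s2 c (\<Sum>(u, v)\<leftarrow>\<Delta> x. \<gamma> a u v)"
      using assms(2) by (simp add: lin_def case_prod_beta')
  qed
qed

lemma vs_field: "vector_space ((*) :: 'k::field \<Rightarrow> 'k \<Rightarrow> 'k)"
  by unfold_locales (auto simp: algebra_simps)

lemma lin_linear: "vector_space s1 \<Longrightarrow> vector_space s2 \<Longrightarrow> lin s1 s2 f \<Longrightarrow> Vector_Spaces.linear s1 s2 f"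
  by (simp add: linear_iff lin_def)

lemma linear_lin: "Vector_Spaces.linear s1 s2 f \<Longrightarrow> lin s1 s2 f"
  by (simp add: linear_iff lin_def)

lemma separate:
  fixes s :: "'k::field \<Rightarrow> 'v::ab_group_add \<Rightarrow> 'v"
  assumes vs: "vector_space s" and v: "v \<noteq> 0"
  shows "\<exists>\<phi>. lin s (*) \<phi> \<and> \<phi> v \<noteq> 0"
proof -
  interpret vector_space s by fact
  have ind: "independent {v}" using v by (simp add: independent_insert)
  let ?B = "extend_basis {v}"
  have B: "independent ?B" "span ?B = UNIV" "v \<in> ?B"
    using independent_extend_basis[OF ind] span_extend_basis[OF ind] extend_basis_superset[OF ind] by auto
  have "lin s (*) (\<lambda>w. representation ?B w v)"
    using linear_representation[OF B(1,2)] by (rule linear_lin)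
  moreover have "representation ?B v v = 1" using representation_basis[OF B(1) B(3)] by simp
  ultimately show ?thesis by (intro exI[of _ "\<lambda>w. representation ?B w v"]) simp
qed

lemma eq_by_functionals:
  fixes s :: "'k::field \<Rightarrow> 'v::ab_group_add \<Rightarrow> 'v"
  assumes vs: "vector_space s" and h: "\<And>\<phi>. lin s (*) \<phi> \<Longrightarrow> \<phi> a = \<phi> b"
  shows "a = b"
proof (rule ccontr)
  assume "a \<noteq> b"
  then obtain \<phi> where "lin s (*) \<phi>" "\<phi> (a - b) \<noteq> 0" using separate[OF vs, of "a - b"] by auto
  moreover have "\<phi> (a - b) = \<phi> a - \<phi> b" using calculation(1) by (intro addv_diff) (simp add: lin_def)
  ultimately show False using h by simp
qed

lemma transfer2:
  fixes sc :: "'k::field \<Rightarrow> 'h::ab_group_add \<Rightarrow> 'h" and sV :: "'k \<Rightarrow> 'v::ab_group_add \<Rightarrow> 'v"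
  assumes vsH: "vector_space sc" and vsV: "vector_space sV"
    and eq: "tensor2_eq sc xs ys" and b: "bil sc sV \<beta>"
  shows "sum_list (map (\<lambda>(u,v). \<beta> u v) xs) = sum_list (map (\<lambda>(u,v). \<beta> u v) ys)"
proof (rule eq_by_functionals[OF vsV])
  fix \<phi> assume \<phi>: "lin sV (*) \<phi>"
  have bf: "bilinear_form sc (\<lambda>u v. \<phi> (\<beta> u v))"
    unfolding bilinear_form_def using b \<phi>
    by (auto intro!: lin_linear vsH vs_field lin_compI[OF \<phi>] simp: bil_def)
  have "\<And>zs. \<phi> (sum_list (map (\<lambda>(u,v). \<beta> u v) zs)) = sum_list (map (\<lambda>(u,v). \<phi> (\<beta> u v)) zs)"
    by (subst lin_sum_list[OF \<phi>]) (simp add: case_prod_beta')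
  then show "\<phi> (sum_list (map (\<lambda>(u,v). \<beta> u v) xs)) = \<phi> (sum_list (map (\<lambda>(u,v). \<beta> u v) ys))"
    using eq bf by (simp add: tensor2_eq_def)
qed

lemma transfer3:
  fixes sc :: "'k::field \<Rightarrow> 'h::ab_group_add \<Rightarrow> 'h" and sV :: "'k \<Rightarrow> 'v::ab_group_add \<Rightarrow> 'v"
  assumes vsH: "vector_space sc" and vsV: "vector_space sV"
    and eq: "tensor3_eq sc xs ys" and b: "tri sc sV \<tau>"
  shows "sum_list (map (\<lambda>(u,v,w). \<tau> u v w) xs) = sum_list (map (\<lambda>(u,v,w). \<tau> u v w) ys)"
proof (rule eq_by_functionals[OF vsV])
  fix \<phi> assume \<phi>: "lin sV (*) \<phi>"
  have bf: "trilinear_form sc (\<lambda>u v w. \<phi> (\<tau> u v w))"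
    unfolding trilinear_form_def using b \<phi>
    by (auto intro!: lin_linear vsH vs_field lin_compI[OF \<phi>] simp: tri_def)
  have "\<And>zs. \<phi> (sum_list (map (\<lambda>(u,v,w). \<tau> u v w) zs)) = sum_list (map (\<lambda>(u,v,w). \<phi> (\<tau> u v w)) zs)"
    by (subst lin_sum_list[OF \<phi>]) (simp add: case_prod_beta')
  then show "\<phi> (sum_list (map (\<lambda>(u,v,w). \<tau> u v w) xs)) = \<phi> (sum_list (map (\<lambda>(u,v,w). \<tau> u v w) ys))"
    using eq bf by (simp add: tensor3_eq_def)
qed

lemma sum_list_map_concat:
  fixes f :: "'a \<Rightarrow> 'b::monoid_add"
  shows "sum_list (map f (concat xss)) = sum_list (map (\<lambda>xs. sum_list (map f xs)) xss)"
  by (induction xss) auto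

lemma bilI: "(\<And>u. lin s1 s2 (\<beta> u)) \<Longrightarrow> (\<And>v. lin s1 s2 (\<lambda>u. \<beta> u v)) \<Longrightarrow> bil s1 s2 \<beta>"
  by (simp add: bil_def)

lemma triI: "(\<And>u v. lin s1 s2 (\<tau> u v)) \<Longrightarrow> (\<And>u w. lin s1 s2 (\<lambda>v. \<tau> u v w)) \<Longrightarrow> (\<And>v w. lin s1 s2 (\<lambda>u. \<tau> u v w)) \<Longrightarrow> tri s1 s2 \<tau>"
  by (simp add: tri_def)

lemma bil_lin1I: "bil s1 s2 \<beta> \<Longrightarrow> lin s0 s1 f \<Longrightarrow> lin s0 s2 (\<lambda>p. \<beta> (f p) v)"
  by (simp add: bil_def lin_def)

lemma bil_lin2I: "bil s1 s2 \<beta> \<Longrightarrow> lin s0 s1 f \<Longrightarrow> lin s0 s2 (\<lambda>p. \<beta> u (f p))"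
  by (simp add: bil_def lin_def)

lemma scale_linI:
  assumes "vector_space s2" "lin s1 (*) g"
  shows "lin s1 s2 (\<lambda>p. s2 (g p) w)"
proof -
  interpret vector_space s2 by fact
  show ?thesis using assms(2) by (simp add: lin_def scale_left_distrib)
qed

locale hopf =
  fixes sc :: "'k::field_char_0 \<Rightarrow> 'h::ring_1 \<Rightarrow> 'h"
    and \<Delta> :: "'h \<Rightarrow> ('h \<times> 'h) list" and \<epsilon> :: "'h \<Rightarrow> 'k" and S :: "'h \<Rightarrow> 'h"
  assumes H: "cocomm_hopf_algebra sc \<Delta> \<epsilon> S"
begin

lemma vsH: "vector_space sc"
  using H by (simp add: cocomm_hopf_algebra_def is_algebra_def)

lemma algH: "alg sc"
  using H unfolding cocomm_hopf_algebra_def is_algebra_def alg_def by metis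

lemma eps_lin: "lin sc (*) \<epsilon>"
  using H by (simp add: cocomm_hopf_algebra_def linear_lin)

lemma S_lin: "lin sc sc S"
  using H by (simp add: cocomm_hopf_algebra_def linear_lin)

lemma eps_mult: "\<epsilon> (x * y) = \<epsilon> x * \<epsilon> y" and eps_one: "\<epsilon> 1 = 1"
  using H by (auto simp: cocomm_hopf_algebra_def)

lemma sw_lin:
  assumes vs: "vector_space sV" and b: "bil sc sV \<beta>"
  shows "lin sc sV (swp \<Delta> \<beta>)"
proof -
  interpret V: vector_space sV by fact
  have add: "swp \<Delta> \<beta> (x + y) = swp \<Delta> \<beta> x + swp \<Delta> \<beta> y" for x y
  proof -
    have "tensor2_eq sc (\<Delta> (x + y)) (\<Delta> x @ \<Delta> y)" using H by (simp add: cocomm_hopf_algebra_def)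
    from transfer2[OF vsH vs this b] show ?thesis by (simp add: swp_def)
  qed
  have sc: "swp \<Delta> \<beta> (sc c x) = sV c (swp \<Delta> \<beta> x)" for c x
  proof -
    have "tensor2_eq sc (\<Delta> (sc c x)) (map (\<lambda>(u,v). (sc c u, v)) (\<Delta> x))" using H by (simp add: cocomm_hopf_algebra_def)
    from transfer2[OF vsH vs this b]
    have "swp \<Delta> \<beta> (sc c x) = sum_list (map (\<lambda>(u,v). \<beta> (sc c u) v) (\<Delta> x))"
      by (simp add: swp_def case_prod_beta' o_def)
    also have "\<dots> = sum_list (map (\<lambda>(u,v). sV c (\<beta> u v)) (\<Delta> x))"
      using b by (simp add: bil_def lin_def)
    also have "\<dots> = sV c (swp \<Delta> \<beta> x)"
      unfolding swp_def by (subst addv_sum_list[where g="sV c"]) (auto simp: V.scale_right_distrib case_prod_beta')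
    finally show ?thesis .
  qed
  show ?thesis using add sc by (simp add: lin_def)
qed

lemma sw_pointI: "vector_space sV \<Longrightarrow> bil sc sV \<beta> \<Longrightarrow> lin s0 sc f \<Longrightarrow> lin s0 sV (\<lambda>p. swp \<Delta> \<beta> (f p))"
  by (rule lin_compI[OF sw_lin])

lemma coassoc:
  assumes vs: "vector_space sV" and t: "tri sc sV \<tau>"
  shows "swp \<Delta> (\<lambda>u v. swp \<Delta> (\<lambda>a b. \<tau> a b v) u) x = swp \<Delta> (\<lambda>u v. swp \<Delta> (\<lambda>a b. \<tau> u a b) v) x"
proof -
  have "tensor3_eq sc
          (concat (map (\<lambda>(u,v). map (\<lambda>(u1,u2). (u1,u2,v)) (\<Delta> u)) (\<Delta> x)))
          (concat (map (\<lambda>(u,v). map (\<lambda>(v1,v2). (u,v1,v2)) (\<Delta> v)) (\<Delta> x)))"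
    using H by (simp add: cocomm_hopf_algebra_def)
  from transfer3[OF vsH vs this t] show ?thesis
    by (simp add: swp_def sum_list_map_concat case_prod_beta' o_def)
qed

lemma cocomm:
  assumes vs: "vector_space sV" and b: "bil sc sV \<beta>"
  shows "swp \<Delta> \<beta> x = swp \<Delta> (\<lambda>u v. \<beta> v u) x"
proof -
  have "tensor2_eq sc (\<Delta> x) (map prod.swap (\<Delta> x))" using H by (simp add: cocomm_hopf_algebra_def)
  from transfer2[OF vsH vs this b] show ?thesis
    by (simp add: swp_def case_prod_beta' o_def)
qed

lemma counit_l:
  assumes vs: "vector_space sV" and f: "lin sc sV \<phi>"
  shows "swp \<Delta> (\<lambda>u v. sV (\<epsilon> u) (\<phi> v)) x = \<phi> x"
proof -
  have "\<phi> x = \<phi> (sum_list (map (\<lambda>(u,v). sc (\<epsilon> u) v) (\<Delta> x)))"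
    using H by (simp add: cocomm_hopf_algebra_def)
  also have "\<dots> = swp \<Delta> (\<lambda>u v. sV (\<epsilon> u) (\<phi> v)) x"
    unfolding swp_def by (subst lin_sum_list[OF f]) (simp add: case_prod_beta' linD[OF f])
  finally show ?thesis by simp
qed

lemma counit_r:
  assumes vs: "vector_space sV" and f: "lin sc sV \<phi>"
  shows "swp \<Delta> (\<lambda>u v. sV (\<epsilon> v) (\<phi> u)) x = \<phi> x"
proof -
  have "\<phi> x = \<phi> (sum_list (map (\<lambda>(u,v). sc (\<epsilon> v) u) (\<Delta> x)))"
    using H by (simp add: cocomm_hopf_algebra_def)
  also have "\<dots> = swp \<Delta> (\<lambda>u v. sV (\<epsilon> v) (\<phi> u)) x"
    unfolding swp_def by (subst lin_sum_list[OF f]) (simp add: case_prod_beta' linD[OF f])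
  finally show ?thesis by simp
qed

lemma compat:
  assumes vs: "vector_space sV" and b: "bil sc sV \<beta>"
  shows "swp \<Delta> \<beta> (x * y) = swp \<Delta> (\<lambda>u v. swp \<Delta> (\<lambda>u' v'. \<beta> (u * u') (v * v')) y) x"
proof -
  have "tensor2_eq sc (\<Delta> (x * y))
            (concat (map (\<lambda>(u,v). map (\<lambda>(u',v'). (u * u', v * v')) (\<Delta> y)) (\<Delta> x)))"
    using H by (simp add: cocomm_hopf_algebra_def)
  from transfer2[OF vsH vs this b] show ?thesis
    by (simp add: swp_def sum_list_map_concat case_prod_beta' o_def)
qed

lemma compat_one:
  assumes vs: "vector_space sV" and b: "bil sc sV \<beta>"
  shows "swp \<Delta> \<beta> 1 = \<beta> 1 1"
proof -
  have "tensor2_eq sc (\<Delta> 1) [(1,1)]"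
    using H by (simp add: cocomm_hopf_algebra_def)
  from transfer2[OF vsH vs this b] show ?thesis
    by (simp add: swp_def)
qed

lemma antipode_l: "swp \<Delta> (\<lambda>u v. S u * v) x = sc (\<epsilon> x) 1"
  using H by (simp add: cocomm_hopf_algebra_def swp_def)

lemma antipode_r: "swp \<Delta> (\<lambda>u v. u * S v) x = sc (\<epsilon> x) 1"
  using H by (simp add: cocomm_hopf_algebra_def swp_def)

end

lemma swp_mult_left: "(c::'a::ring) * swp \<Delta> \<beta> x = swp \<Delta> (\<lambda>u v. c * \<beta> u v) x"
  by (rule swp_addv[where g="\<lambda>z. c * z"]) (simp add: distrib_left)
lemma swp_mult_right: "swp \<Delta> \<beta> x * (c::'a::ring) = swp \<Delta> (\<lambda>u v. \<beta> u v * c) x"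
  by (rule swp_addv[where g="\<lambda>z. z * c"]) (simp add: distrib_right)

context hopf begin

lemma sc_mult_l: "sc a u * w = sc a (u * w)" and sc_mult_r: "u * sc a w = sc a (u * w)"
  using algH unfolding alg_def by metis+

lemma swp_sc: "sc c (swp \<Delta> \<beta> x) = swp \<Delta> (\<lambda>u v. sc c (\<beta> u v)) x"
proof -
  interpret vector_space sc by (rule vsH)
  show ?thesis by (rule swp_addv) (simp add: scale_right_distrib)
qed

lemma scsc: "sc a (sc b x) = sc (a * b) x"
  using vsH by (simp add: vector_space.vector_space_assms(3))

lemmas lin_intros = lin_idI lin_mult_rightI[OF algH] lin_mult_leftI[OF algH] lin_compI[OF S_lin]
  lin_swp_paramI sw_pointI scale_linI lin_compI[OF eps_lin] vsH bilI triI


lemma S_mult: "S (x * y) = S y * S x"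
proof -
  have bilpS: "bil sc sc (\<lambda>p q. p * S q)" by (auto intro!: lin_intros)
  define \<tau>x where "\<tau>x = (\<lambda>p q r. swp \<Delta> (\<lambda>y1 y2. swp \<Delta> (\<lambda>a' b'. S y1 * S p * (q * a') * S (r * b')) y2) y)"
  define \<Phi> where "\<Phi> = (\<lambda>v. swp \<Delta> (\<lambda>y1 y2. swp \<Delta> (\<lambda>a' b'. S y1 * a' * S (v * b')) y2) y)"
  have tx: "tri sc sc \<tau>x" unfolding \<tau>x_def by (auto intro!: lin_intros)
  have linPhi: "lin sc sc \<Phi>" unfolding \<Phi>_def by (auto intro!: lin_intros)
  have "S y * S x = swp \<Delta> (\<lambda>y1 y2. sc (\<epsilon> y2) (S y1)) y * swp \<Delta> (\<lambda>x1 x2. sc (\<epsilon> x2) (S x1)) x"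
    using counit_r[OF vsH S_lin] by simp
  also have "\<dots> = swp \<Delta> (\<lambda>x1 x2. swp \<Delta> (\<lambda>y1 y2. sc (\<epsilon> (x2 * y2)) (S y1 * S x1)) y) x"
    by (simp add: swp_mult_left swp_mult_right sc_mult_l sc_mult_r scsc eps_mult mult.commute swp_sc)
  also have "\<dots> = swp \<Delta> (\<lambda>x1 x2. swp \<Delta> (\<lambda>y1 y2. swp \<Delta> (\<lambda>a b. swp \<Delta> (\<lambda>a' b'. S y1 * S x1 * (a * a') * S (b * b')) y2) x2) y) x"
  proof -
    have "sc (\<epsilon> (x2 * y2)) (S y1 * S x1) = swp \<Delta> (\<lambda>a b. swp \<Delta> (\<lambda>a' b'. S y1 * S x1 * (a * a') * S (b * b')) y2) x2" for x1 x2 y1 y2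
    proof -
      have "sc (\<epsilon> (x2 * y2)) (S y1 * S x1) = S y1 * S x1 * swp \<Delta> (\<lambda>a b. a * S b) (x2 * y2)"
        by (simp add: antipode_r sc_mult_r)
      also have "\<dots> = S y1 * S x1 * swp \<Delta> (\<lambda>a b. swp \<Delta> (\<lambda>a' b'. a * a' * S (b * b')) y2) x2"
        by (simp add: compat[OF vsH bilpS])
      also have "\<dots> = swp \<Delta> (\<lambda>a b. swp \<Delta> (\<lambda>a' b'. S y1 * S x1 * (a * a') * S (b * b')) y2) x2"
        by (simp add: swp_mult_left mult.assoc)
      finally show ?thesis .
    qed
    then show ?thesis by simp
  qed
  also have "\<dots> = swp \<Delta> (\<lambda>u v. swp \<Delta> (\<lambda>a b. \<tau>x u a b) v) x"
    unfolding \<tau>x_def by (simp add: swp_swap[of \<Delta> \<Delta> _ y])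
  also have "\<dots> = swp \<Delta> (\<lambda>u v. swp \<Delta> (\<lambda>a b. \<tau>x a b v) u) x"
    by (rule coassoc[OF vsH tx, symmetric])
  also have "\<dots> = swp \<Delta> (\<lambda>u v. sc (\<epsilon> u) (\<Phi> v)) x"
  proof -
    have "swp \<Delta> (\<lambda>a b. \<tau>x a b v) u = sc (\<epsilon> u) (\<Phi> v)" for u v
    proof -
      have "swp \<Delta> (\<lambda>a b. \<tau>x a b v) u = swp \<Delta> (\<lambda>y1 y2. swp \<Delta> (\<lambda>a' b'. swp \<Delta> (\<lambda>a b. S y1 * S a * (b * a') * S (v * b')) u) y2) y"
        unfolding \<tau>x_def by (simp add: swp_swap[of \<Delta> \<Delta> _ u])
      also have "\<dots> = swp \<Delta> (\<lambda>y1 y2. swp \<Delta> (\<lambda>a' b'. S y1 * swp \<Delta> (\<lambda>a b. S a * b) u * a' * S (v * b')) y2) y"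
        by (simp add: swp_mult_left swp_mult_right mult.assoc)
      also have "\<dots> = sc (\<epsilon> u) (\<Phi> v)"
        unfolding \<Phi>_def by (simp add: antipode_l swp_sc sc_mult_l sc_mult_r)
      finally show ?thesis .
    qed
    then show ?thesis by simp
  qed
  also have "\<dots> = \<Phi> x"
    by (rule counit_l[OF vsH linPhi])
  also have "\<dots> = swp \<Delta> (\<lambda>u v. swp \<Delta> (\<lambda>a b. S a * b * S (x * v)) u) y"
    unfolding \<Phi>_def
    by (rule coassoc[OF vsH, where \<tau>="\<lambda>p q r. S p * q * S (x * r)", symmetric]) (auto intro!: lin_intros)
  also have "\<dots> = swp \<Delta> (\<lambda>u v. sc (\<epsilon> u) (S (x * v))) y"
    by (simp add: swp_mult_right[symmetric] antipode_l sc_mult_l)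
  also have "\<dots> = S (x * y)"
    by (rule counit_l[OF vsH]) (auto intro!: lin_intros)
  finally show ?thesis by simp
qed

end

lemma swp_scaleV: "vector_space s \<Longrightarrow> s c (swp \<Delta> \<beta> x) = swp \<Delta> (\<lambda>u v. s c (\<beta> u v)) x"
  by (rule swp_addv) (simp add: vector_space.vector_space_assms(1))

context hopf begin

lemma eps_tensor:
  assumes vs: "vector_space sV" and b: "bil sc sV \<beta>"
  shows "sV (\<epsilon> v) (\<beta> P Q) = swp \<Delta> (\<lambda>w r. swp \<Delta> (\<lambda>a b. swp \<Delta> (\<lambda>c d. \<beta> (P * a * S d) (Q * b * S c)) r) w) v"
proof -
  interpret V: vector_space sV by fact
  define \<psi> where "\<psi> = (\<lambda>a b c d. \<beta> (P * a * S d) (Q * b * S c))"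
  have "swp \<Delta> (\<lambda>w r. swp \<Delta> (\<lambda>a b. swp \<Delta> (\<lambda>c d. \<psi> a b c d) r) w) v
      = swp \<Delta> (\<lambda>a m. swp \<Delta> (\<lambda>b r. swp \<Delta> (\<lambda>c d. \<psi> a b c d) r) m) v"
    by (rule coassoc[OF vs]) (auto intro!: lin_intros vs bil_lin1I[OF b] bil_lin2I[OF b] simp: \<psi>_def)
  also have "\<dots> = swp \<Delta> (\<lambda>a m. swp \<Delta> (\<lambda>n d. swp \<Delta> (\<lambda>b c. \<psi> a b c d) n) m) v"
    by (intro swp_cong coassoc[OF vs, symmetric]) (auto intro!: lin_intros vs bil_lin1I[OF b] bil_lin2I[OF b] simp: \<psi>_def)
  also have "\<dots> = swp \<Delta> (\<lambda>a m. swp \<Delta> (\<lambda>n d. sV (\<epsilon> n) (\<beta> (P * a * S d) Q)) m) v"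
  proof (intro swp_cong)
    fix a m n d
    have l: "lin sc sV (\<lambda>z. \<beta> (P * a * S d) (Q * z))"
      by (auto intro!: lin_intros vs bil_lin1I[OF b] bil_lin2I[OF b])
    have "swp \<Delta> (\<lambda>b c. \<psi> a b c d) n = \<beta> (P * a * S d) (Q * swp \<Delta> (\<lambda>b c. b * S c) n)"
      unfolding \<psi>_def by (subst swp_lin[OF l]) (simp add: mult.assoc)
    also have "\<dots> = sV (\<epsilon> n) (\<beta> (P * a * S d) Q)"
      using linD(2)[OF l, of "\<epsilon> n" 1] by (simp add: antipode_r)
    finally show "swp \<Delta> (\<lambda>b c. \<psi> a b c d) n = sV (\<epsilon> n) (\<beta> (P * a * S d) Q)" .
  qed
  also have "\<dots> = swp \<Delta> (\<lambda>a m. \<beta> (P * a * S m) Q) v"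
    by (intro swp_cong counit_l[OF vs]) (auto intro!: lin_intros vs bil_lin1I[OF b] bil_lin2I[OF b])
  also have "\<dots> = sV (\<epsilon> v) (\<beta> P Q)"
  proof -
    have l: "lin sc sV (\<lambda>z. \<beta> (P * z) Q)"
      by (auto intro!: lin_intros vs bil_lin1I[OF b] bil_lin2I[OF b])
    have "swp \<Delta> (\<lambda>a m. \<beta> (P * a * S m) Q) v = \<beta> (P * swp \<Delta> (\<lambda>a m. a * S m) v) Q"
      by (subst swp_lin[OF l]) (simp add: mult.assoc)
    then show ?thesis using linD(2)[OF l, of "\<epsilon> v" 1] by (simp add: antipode_r)
  qed
  finally show ?thesis unfolding \<psi>_def by simp
qed

lemma delta_S:
  assumes vs: "vector_space sV" and b: "bil sc sV \<beta>"
  shows "swp \<Delta> \<beta> (S x) = swp \<Delta> (\<lambda>p q. \<beta> (S q) (S p)) x"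
proof -
  interpret V: vector_space sV by fact
  have lb: "lin sc sV (swp \<Delta> \<beta>)" by (rule sw_lin[OF vs b])
  have bg: "bil sc sV (\<lambda>p q. \<beta> (p * S d) (q * S c))" for c d
    by (auto intro!: lin_intros vs bil_lin1I[OF b] bil_lin2I[OF b])
  define \<tau> where "\<tau> = (\<lambda>u w r. swp \<Delta> (\<lambda>c d. swp \<Delta> (\<lambda>p q. \<beta> (p * S d) (q * S c)) (S u * w)) r)"
  have t: "tri sc sV \<tau>" unfolding \<tau>_def
    by (intro lin_intros vs bil_lin1I[OF b] bil_lin2I[OF b] bg)
  have "swp \<Delta> \<beta> (S x) = swp \<Delta> \<beta> (swp \<Delta> (\<lambda>u v. sc (\<epsilon> v) (S u)) x)"
    using counit_r[OF vsH S_lin] by simp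
  also have "\<dots> = swp \<Delta> (\<lambda>u v. sV (\<epsilon> v) (swp \<Delta> \<beta> (S u))) x"
    by (simp add: swp_lin[OF lb] linD(2)[OF lb])
  also have "\<dots> = swp \<Delta> (\<lambda>u v. swp \<Delta> (\<lambda>P Q. swp \<Delta> (\<lambda>w r. swp \<Delta> (\<lambda>a b. swp \<Delta> (\<lambda>c d. \<beta> (P * a * S d) (Q * b * S c)) r) w) v) (S u)) x"
    by (simp add: swp_scaleV[OF vs] eps_tensor[OF vs b])
  also have "\<dots> = swp \<Delta> (\<lambda>u v. swp \<Delta> (\<lambda>w r. swp \<Delta> (\<lambda>c d. swp \<Delta> (\<lambda>P Q. swp \<Delta> (\<lambda>a b. \<beta> (P * a * S d) (Q * b * S c)) w) (S u)) r) v) x"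
  proof (intro swp_cong)
    fix u v
    have s1: "swp \<Delta> (\<lambda>P Q. swp \<Delta> (\<lambda>w r. swp \<Delta> (\<lambda>a b. swp \<Delta> (\<lambda>c d. \<beta> (P * a * S d) (Q * b * S c)) r) w) v) (S u)
        = swp \<Delta> (\<lambda>w r. swp \<Delta> (\<lambda>P Q. swp \<Delta> (\<lambda>a b. swp \<Delta> (\<lambda>c d. \<beta> (P * a * S d) (Q * b * S c)) r) w) (S u)) v"
      by (rule swp_swap)
    have s2: "swp \<Delta> (\<lambda>P Q. swp \<Delta> (\<lambda>a b. swp \<Delta> (\<lambda>c d. \<beta> (P * a * S d) (Q * b * S c)) r) w) (S u)
       = swp \<Delta> (\<lambda>P Q. swp \<Delta> (\<lambda>c d. swp \<Delta> (\<lambda>a b. \<beta> (P * a * S d) (Q * b * S c)) w) r) (S u)" for w r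
      by (intro swp_cong swp_swap)
    have s3: "swp \<Delta> (\<lambda>P Q. swp \<Delta> (\<lambda>c d. swp \<Delta> (\<lambda>a b. \<beta> (P * a * S d) (Q * b * S c)) w) r) (S u)
       = swp \<Delta> (\<lambda>c d. swp \<Delta> (\<lambda>P Q. swp \<Delta> (\<lambda>a b. \<beta> (P * a * S d) (Q * b * S c)) w) (S u)) r" for w r
      by (rule swp_swap)
    show "swp \<Delta> (\<lambda>P Q. swp \<Delta> (\<lambda>w r. swp \<Delta> (\<lambda>a b. swp \<Delta> (\<lambda>c d. \<beta> (P * a * S d) (Q * b * S c)) r) w) v) (S u)
        = swp \<Delta> (\<lambda>w r. swp \<Delta> (\<lambda>c d. swp \<Delta> (\<lambda>P Q. swp \<Delta> (\<lambda>a b. \<beta> (P * a * S d) (Q * b * S c)) w) (S u)) r) v"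
      unfolding s1 s2 s3 ..
  qed
  also have "\<dots> = swp \<Delta> (\<lambda>u v. swp \<Delta> (\<lambda>w r. \<tau> u w r) v) x"
    unfolding \<tau>_def by (simp add: compat[OF vs bg])
  also have "\<dots> = swp \<Delta> (\<lambda>y r. swp \<Delta> (\<lambda>u w. \<tau> u w r) y) x"
    by (rule coassoc[OF vs t, symmetric])
  also have "\<dots> = swp \<Delta> (\<lambda>y r. sV (\<epsilon> y) (swp \<Delta> (\<lambda>c d. \<beta> (S d) (S c)) r)) x"
  proof (intro swp_cong)
    fix y r
    have "swp \<Delta> (\<lambda>u w. \<tau> u w r) y = swp \<Delta> (\<lambda>c d. swp \<Delta> (\<lambda>u w. swp \<Delta> (\<lambda>p q. \<beta> (p * S d) (q * S c)) (S u * w)) y) r"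
      unfolding \<tau>_def by (rule swp_swap)
    also have "\<dots> = swp \<Delta> (\<lambda>c d. swp \<Delta> (\<lambda>p q. \<beta> (p * S d) (q * S c)) (swp \<Delta> (\<lambda>u w. S u * w) y)) r"
      by (simp add: swp_lin[OF sw_lin[OF vs bg]])
    also have "\<dots> = swp \<Delta> (\<lambda>c d. sV (\<epsilon> y) (\<beta> (S d) (S c))) r"
      by (simp add: antipode_l linD(2)[OF sw_lin[OF vs bg]] compat_one[OF vs bg])
    also have "\<dots> = sV (\<epsilon> y) (swp \<Delta> (\<lambda>c d. \<beta> (S d) (S c)) r)"
      by (simp add: swp_scaleV[OF vs])
    finally show "swp \<Delta> (\<lambda>u w. \<tau> u w r) y = sV (\<epsilon> y) (swp \<Delta> (\<lambda>c d. \<beta> (S d) (S c)) r)" .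
  qed
  also have "\<dots> = swp \<Delta> (\<lambda>c d. \<beta> (S d) (S c)) x"
    by (rule counit_l[OF vs]) (auto intro!: lin_intros vs bil_lin1I[OF b] bil_lin2I[OF b])
  finally show ?thesis .
qed

end

definition quad :: "('k::field \<Rightarrow> 'a::ab_group_add \<Rightarrow> 'a) \<Rightarrow> ('k \<Rightarrow> 'b::ab_group_add \<Rightarrow> 'b) \<Rightarrow> ('a \<Rightarrow> 'a \<Rightarrow> 'a \<Rightarrow> 'a \<Rightarrow> 'b) \<Rightarrow> bool" where
  "quad s1 s2 \<chi> \<longleftrightarrow> (\<forall>b c d. lin s1 s2 (\<lambda>a. \<chi> a b c d)) \<and> (\<forall>a c d. lin s1 s2 (\<lambda>b. \<chi> a b c d))
     \<and> (\<forall>a b d. lin s1 s2 (\<lambda>c. \<chi> a b c d)) \<and> (\<forall>a b c. lin s1 s2 (\<lambda>d. \<chi> a b c d))"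

lemma quadD: "quad s1 s2 \<chi> \<Longrightarrow> lin s1 s2 (\<lambda>a. \<chi> a b c d)" "quad s1 s2 \<chi> \<Longrightarrow> lin s1 s2 (\<lambda>b. \<chi> a b c d)"
   "quad s1 s2 \<chi> \<Longrightarrow> lin s1 s2 (\<lambda>c. \<chi> a b c d)" "quad s1 s2 \<chi> \<Longrightarrow> lin s1 s2 (\<lambda>d. \<chi> a b c d)"
  by (auto simp: quad_def)

context hopf begin

lemma assoc4:
  assumes vs: "vector_space sV" and q: "quad sc sV \<chi>"
  shows "swp \<Delta> (\<lambda>u v. swp \<Delta> (\<lambda>a b. swp \<Delta> (\<lambda>c d. \<chi> a b c d) v) u) x
       = swp \<Delta> (\<lambda>a m. swp \<Delta> (\<lambda>n d. swp \<Delta> (\<lambda>b c. \<chi> a b c d) n) m) x"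
proof -
  have "swp \<Delta> (\<lambda>u v. swp \<Delta> (\<lambda>a b. swp \<Delta> (\<lambda>c d. \<chi> a b c d) v) u) x
      = swp \<Delta> (\<lambda>a m. swp \<Delta> (\<lambda>b v. swp \<Delta> (\<lambda>c d. \<chi> a b c d) v) m) x"
    by (rule coassoc[OF vs]) (intro lin_intros vs quadD[OF q])
  also have "\<dots> = swp \<Delta> (\<lambda>a m. swp \<Delta> (\<lambda>n d. swp \<Delta> (\<lambda>b c. \<chi> a b c d) n) m) x"
    by (intro swp_cong coassoc[OF vs, symmetric]) (intro lin_intros vs quadD[OF q])
  finally show ?thesis .
qed

lemma mid_swap:
  assumes vs: "vector_space sV" and q: "quad sc sV \<chi>"
  shows "swp \<Delta> (\<lambda>u v. swp \<Delta> (\<lambda>a b. swp \<Delta> (\<lambda>c d. \<chi> a b c d) v) u) x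
       = swp \<Delta> (\<lambda>u v. swp \<Delta> (\<lambda>a b. swp \<Delta> (\<lambda>c d. \<chi> a c b d) v) u) x"
proof -
  have q': "quad sc sV (\<lambda>a b c d. \<chi> a c b d)" using q by (simp add: quad_def)
  have "swp \<Delta> (\<lambda>u v. swp \<Delta> (\<lambda>a b. swp \<Delta> (\<lambda>c d. \<chi> a b c d) v) u) x
       = swp \<Delta> (\<lambda>a m. swp \<Delta> (\<lambda>n d. swp \<Delta> (\<lambda>b c. \<chi> a b c d) n) m) x"
    by (rule assoc4[OF vs q])
  also have "\<dots> = swp \<Delta> (\<lambda>a m. swp \<Delta> (\<lambda>n d. swp \<Delta> (\<lambda>b c. \<chi> a c b d) n) m) x"
    by (intro swp_cong cocomm[OF vs]) (intro lin_intros vs quadD[OF q])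
  also have "\<dots> = swp \<Delta> (\<lambda>u v. swp \<Delta> (\<lambda>a b. swp \<Delta> (\<lambda>c d. \<chi> a c b d) v) u) x"
    by (rule assoc4[OF vs q', symmetric])
  finally show ?thesis .
qed

lemma last_swap:
  assumes vs: "vector_space sV" and q: "quad sc sV \<chi>"
  shows "swp \<Delta> (\<lambda>u v. swp \<Delta> (\<lambda>a b. swp \<Delta> (\<lambda>c d. \<chi> a b c d) v) u) x
       = swp \<Delta> (\<lambda>u v. swp \<Delta> (\<lambda>a b. swp \<Delta> (\<lambda>c d. \<chi> a b d c) v) u) x"
  by (intro swp_cong cocomm[OF vs]) (intro lin_intros vs quadD[OF q])

lemma S_one: "S 1 = 1"
proof -
  have b: "bil sc sc (\<lambda>u v. S u * v)" by (intro lin_intros)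
  have "S 1 * 1 = sc (\<epsilon> 1) 1" using antipode_l[of 1] compat_one[OF vsH b] by simp
  then show ?thesis using eps_one vsH by (simp add: vector_space.vector_space_assms(4))
qed

end

context hopf begin

lemma coalg_lin: "coalgebra_hom sc \<Delta> \<epsilon> B \<Longrightarrow> lin sc sc B"
  by (simp add: coalgebra_hom_def linear_lin)

lemma coalg_eps: "coalgebra_hom sc \<Delta> \<epsilon> B \<Longrightarrow> \<epsilon> (B x) = \<epsilon> x"
  by (simp add: coalgebra_hom_def)

lemma coalg_sw:
  assumes B: "coalgebra_hom sc \<Delta> \<epsilon> B" and vs: "vector_space sV" and b: "bil sc sV \<beta>"
  shows "swp \<Delta> \<beta> (B x) = swp \<Delta> (\<lambda>u v. \<beta> (B u) (B v)) x"
proof -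
  have "tensor2_eq sc (\<Delta> (B x)) (map (\<lambda>(u,v). (B u, B v)) (\<Delta> x))"
    using B by (simp add: coalgebra_hom_def)
  from transfer2[OF vsH vs this b] show ?thesis
    by (simp add: swp_def case_prod_beta' o_def)
qed

end

locale rbs =
  fixes sc :: "'k::field_char_0 \<Rightarrow> 'h::ring_1 \<Rightarrow> 'h"
    and \<Delta> :: "'h \<Rightarrow> ('h \<times> 'h) list" and \<epsilon> :: "'h \<Rightarrow> 'k" and S B1 B2 :: "'h \<Rightarrow> 'h"
    and scA :: "'k \<Rightarrow> 'a::comm_ring_1 \<Rightarrow> 'a"
  assumes RB: "rota_baxter_system sc \<Delta> \<epsilon> S B1 B2" and CA: "comm_algebra scA"

sublocale rbs \<subseteq> hopf
  using RB by unfold_locales (simp add: rota_baxter_system_def)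

context rbs begin

lemma B1h: "coalgebra_hom sc \<Delta> \<epsilon> B1" and B2h: "coalgebra_hom sc \<Delta> \<epsilon> B2"
  using RB by (auto simp: rota_baxter_system_def)

lemma B1_lin: "lin sc sc B1" and B2_lin: "lin sc sc B2"
  using coalg_lin[OF B1h] coalg_lin[OF B2h] .

lemma vsA: "vector_space scA" using CA by (simp add: comm_algebra_def)

lemma algA: "alg scA"
  unfolding alg_def
proof (intro allI conjI)
  fix c and x y :: 'a
  show "scA c (x * y) = scA c x * y" using CA by (simp add: comm_algebra_def)
  have "scA c (y * x) = scA c y * x" using CA by (simp add: comm_algebra_def)
  then show "scA c (x * y) = x * scA c y" by (simp add: mult.commute)
qed

lemmas lin_intros2 = lin_intros lin_compI[OF B1_lin] lin_compI[OF B2_lin]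
  lin_mult_rightI[OF algA] lin_mult_leftI[OF algA] vsA

abbreviation "\<sigma> \<equiv> cocycle \<Delta> S B1 B2"
abbreviation "K \<equiv> H1 \<Delta> S B1 B2"

lemma sigma_swp: "\<sigma> a = swp \<Delta> (\<lambda>u v. B1 u * S (B2 v)) a"
  by (simp add: cocycle_def swp_def)

lemma sigma_coprod:
  assumes vs: "vector_space sV" and b: "bil sc sV \<beta>"
  shows "swp \<Delta> \<beta> (\<sigma> a) = swp \<Delta> (\<lambda>u v. \<beta> (\<sigma> u) (\<sigma> v)) a"
proof -
  note li = lin_intros2 vs bil_lin1I[OF b] bil_lin2I[OF b]
  have lb: "lin sc sV (swp \<Delta> \<beta>)" by (rule sw_lin[OF vs b])
  have "swp \<Delta> \<beta> (\<sigma> a) = swp \<Delta> (\<lambda>u v. swp \<Delta> \<beta> (B1 u * S (B2 v))) a"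
    unfolding sigma_swp by (rule swp_lin[OF lb])
  also have "\<dots> = swp \<Delta> (\<lambda>u v. swp \<Delta> (\<lambda>p q. swp \<Delta> (\<lambda>c d. \<beta> (B1 p * S (B2 d)) (B1 q * S (B2 c))) v) u) a"
  proof (intro swp_cong)
    fix u v
    have b1: "bil sc sV (\<lambda>p q. swp \<Delta> (\<lambda>p' q'. \<beta> (p * p') (q * q')) (S (B2 v)))"
      by (intro li)
    have b2: "bil sc sV (\<lambda>p' q'. \<beta> (B1 p * p') (B1 q * q'))" for p q
      by (intro li)
    have b3: "bil sc sV (\<lambda>p' q'. \<beta> (B1 p * S q') (B1 q * S p'))" for p q
      by (intro li)
    have "swp \<Delta> \<beta> (B1 u * S (B2 v)) = swp \<Delta> (\<lambda>p q. swp \<Delta> (\<lambda>p' q'. \<beta> (p * p') (q * q')) (S (B2 v))) (B1 u)"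
      by (rule compat[OF vs b])
    also have "\<dots> = swp \<Delta> (\<lambda>p q. swp \<Delta> (\<lambda>p' q'. \<beta> (B1 p * p') (B1 q * q')) (S (B2 v))) u"
      by (rule coalg_sw[OF B1h vs b1])
    also have "\<dots> = swp \<Delta> (\<lambda>p q. swp \<Delta> (\<lambda>p' q'. \<beta> (B1 p * S q') (B1 q * S p')) (B2 v)) u"
      by (intro swp_cong delta_S[OF vs b2])
    also have "\<dots> = swp \<Delta> (\<lambda>p q. swp \<Delta> (\<lambda>c d. \<beta> (B1 p * S (B2 d)) (B1 q * S (B2 c))) v) u"
      by (intro swp_cong coalg_sw[OF B2h vs b3])
    finally show "swp \<Delta> \<beta> (B1 u * S (B2 v)) = swp \<Delta> (\<lambda>p q. swp \<Delta> (\<lambda>c d. \<beta> (B1 p * S (B2 d)) (B1 q * S (B2 c))) v) u" .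
  qed
  also have "\<dots> = swp \<Delta> (\<lambda>u v. swp \<Delta> (\<lambda>p q. swp \<Delta> (\<lambda>c d. \<beta> (B1 p * S (B2 c)) (B1 q * S (B2 d))) v) u) a"
    by (rule last_swap[OF vs]) (unfold quad_def, intro allI conjI li)
  also have "\<dots> = swp \<Delta> (\<lambda>u v. swp \<Delta> (\<lambda>p q. swp \<Delta> (\<lambda>c d. \<beta> (B1 p * S (B2 q)) (B1 c * S (B2 d))) v) u) a"
    by (rule mid_swap[OF vs]) (unfold quad_def, intro allI conjI li)
  also have "\<dots> = swp \<Delta> (\<lambda>u v. \<beta> (\<sigma> u) (\<sigma> v)) a"
  proof (intro swp_cong)
    fix u v
    have l1: "lin sc sV (\<lambda>z. \<beta> z (\<sigma> v))" by (intro li)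
    have l2: "lin sc sV (\<lambda>z. \<beta> w z)" for w by (intro li)
    show "swp \<Delta> (\<lambda>p q. swp \<Delta> (\<lambda>c d. \<beta> (B1 p * S (B2 q)) (B1 c * S (B2 d))) v) u = \<beta> (\<sigma> u) (\<sigma> v)"
    proof -
      have "\<beta> (\<sigma> u) (\<sigma> v) = swp \<Delta> (\<lambda>p q. \<beta> (B1 p * S (B2 q)) (\<sigma> v)) u"
        unfolding sigma_swp[of u] by (rule swp_lin[OF l1])
      also have "\<dots> = swp \<Delta> (\<lambda>p q. swp \<Delta> (\<lambda>c d. \<beta> (B1 p * S (B2 q)) (B1 c * S (B2 d))) v) u"
        unfolding sigma_swp[of v] by (intro swp_cong swp_lin[OF l2])
      finally show ?thesis by simp
    qed
  qed
  finally show ?thesis .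
qed

lemma H1_coprod:
  assumes x: "x \<in> K"
  shows "\<exists>xs. set xs \<subseteq> K \<times> K \<and> tensor2_eq sc (\<Delta> x) xs"
proof -
  obtain a where a: "x = \<sigma> a" using x by (auto simp: H1_def)
  let ?xs = "map (\<lambda>(u,v). (\<sigma> u, \<sigma> v)) (\<Delta> a)"
  have "set ?xs \<subseteq> K \<times> K" by (auto simp: H1_def)
  moreover have "tensor2_eq sc (\<Delta> x) ?xs"
    unfolding tensor2_eq_def
  proof (intro allI impI)
    fix \<beta> :: "'h \<Rightarrow> 'h \<Rightarrow> 'k" assume "bilinear_form sc \<beta>"
    then have b: "bil sc (*) \<beta>" by (simp add: bilinear_form_def bil_def linear_lin)
    show "(\<Sum>(u, v)\<leftarrow>\<Delta> x. \<beta> u v) = (\<Sum>(u, v)\<leftarrow>?xs. \<beta> u v)"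
      using sigma_coprod[OF vs_field b, of a] a by (simp add: swp_def case_prod_beta' o_def)
  qed
  ultimately show ?thesis by blast
qed

end

context rbs begin

abbreviation "GG \<equiv> Char_H sc \<Delta> \<epsilon> scA"
abbreviation "GD \<equiv> Char_desc sc \<Delta> \<epsilon> S B1 B2 scA"

lemma carrier_GG: "f \<in> carrier GG \<longleftrightarrow> lin sc scA f \<and> f 1 = 1 \<and> (\<forall>x y. f (x * y) = f x * f y)"
  using vsH vsA by (auto simp: Char_H_def lin_linear linear_lin)

lemma mult_GG: "f \<otimes>\<^bsub>GG\<^esub> g = (\<lambda>x. swp \<Delta> (\<lambda>u v. f u * g v) x)"
  by (simp add: Char_H_def swp_def)

lemma one_GG: "\<one>\<^bsub>GG\<^esub> = (\<lambda>x. scA (\<epsilon> x) 1)"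
  by (simp add: Char_H_def)

lemma scA_1_mult: "scA c 1 * a = scA c a"
  using algA unfolding alg_def by (metis mult_1)

lemma scA_scale: "scA c (scA d a) = scA (c * d) a"
  using vsA by (simp add: vector_space.vector_space_assms(3))

lemma scA_one: "scA 1 a = a"
  using vsA by (simp add: vector_space.vector_space_assms(4))

lemma group_GG: "group GG"
proof (rule groupI)
  fix f g assume f: "f \<in> carrier GG" and g: "g \<in> carrier GG"
  have lf: "lin sc scA f" and lg: "lin sc scA g" using f g by (auto simp: carrier_GG)
  have b: "bil sc scA (\<lambda>u v. f u * g v)" by (intro lin_intros2 lf lg)
  have "lin sc scA (swp \<Delta> (\<lambda>u v. f u * g v))" by (rule sw_lin[OF vsA b])
  moreover have "swp \<Delta> (\<lambda>u v. f u * g v) 1 = 1"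
    using compat_one[OF vsA b] f g by (simp add: carrier_GG)
  moreover have "swp \<Delta> (\<lambda>u v. f u * g v) (x * y) = swp \<Delta> (\<lambda>u v. f u * g v) x * swp \<Delta> (\<lambda>u v. f u * g v) y" for x y
  proof -
    have "swp \<Delta> (\<lambda>u v. f u * g v) (x * y) = swp \<Delta> (\<lambda>u v. swp \<Delta> (\<lambda>u' v'. f (u * u') * g (v * v')) y) x"
      by (rule compat[OF vsA b])
    also have "\<dots> = swp \<Delta> (\<lambda>u v. swp \<Delta> (\<lambda>u' v'. (f u * g v) * (f u' * g v')) y) x"
      using f g by (simp add: carrier_GG mult_ac)
    also have "\<dots> = swp \<Delta> (\<lambda>u v. (f u * g v) * swp \<Delta> (\<lambda>u' v'. f u' * g v') y) x"
      by (simp only: swp_mult_left)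
    also have "\<dots> = swp \<Delta> (\<lambda>u v. f u * g v) x * swp \<Delta> (\<lambda>u v. f u * g v) y"
      by (simp only: swp_mult_right)
    finally show ?thesis .
  qed
  ultimately show "f \<otimes>\<^bsub>GG\<^esub> g \<in> carrier GG"
    by (simp add: carrier_GG mult_GG)
next
  have l: "lin sc scA (\<lambda>x. scA (\<epsilon> x) 1)" by (intro scale_linI vsA eps_lin)
  show "\<one>\<^bsub>GG\<^esub> \<in> carrier GG"
    using l by (simp add: carrier_GG one_GG eps_one eps_mult scA_one scA_1_mult scA_scale)
next
  fix f g h assume f: "f \<in> carrier GG" and g: "g \<in> carrier GG" and h: "h \<in> carrier GG"
  have lf: "lin sc scA f" and lg: "lin sc scA g" and lh: "lin sc scA h" using f g h by (auto simp: carrier_GG)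
  have t: "tri sc scA (\<lambda>a b c. f a * g b * h c)" by (intro lin_intros2 lf lg lh)
  have "swp \<Delta> (\<lambda>u v. swp \<Delta> (\<lambda>a b. f a * g b) u * h v) x = swp \<Delta> (\<lambda>u v. f u * swp \<Delta> (\<lambda>a b. g a * h b) v) x" for x
  proof -
    have "swp \<Delta> (\<lambda>u v. swp \<Delta> (\<lambda>a b. f a * g b) u * h v) x = swp \<Delta> (\<lambda>u v. swp \<Delta> (\<lambda>a b. f a * g b * h v) u) x"
      by (simp add: swp_mult_right)
    also have "\<dots> = swp \<Delta> (\<lambda>u v. swp \<Delta> (\<lambda>a b. f u * g a * h b) v) x"
      by (rule coassoc[OF vsA t])
    also have "\<dots> = swp \<Delta> (\<lambda>u v. f u * swp \<Delta> (\<lambda>a b. g a * h b) v) x"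
      by (simp add: swp_mult_left mult.assoc)
    finally show ?thesis .
  qed
  then show "f \<otimes>\<^bsub>GG\<^esub> g \<otimes>\<^bsub>GG\<^esub> h = f \<otimes>\<^bsub>GG\<^esub> (g \<otimes>\<^bsub>GG\<^esub> h)"
    by (simp add: mult_GG)
next
  fix f assume f: "f \<in> carrier GG"
  have lf: "lin sc scA f" using f by (auto simp: carrier_GG)
  show "\<one>\<^bsub>GG\<^esub> \<otimes>\<^bsub>GG\<^esub> f = f"
    using counit_l[OF vsA lf] by (simp add: mult_GG one_GG scA_1_mult)
next
  fix f assume f: "f \<in> carrier GG"
  have lf: "lin sc scA f" using f by (auto simp: carrier_GG)
  have fm: "f (x * y) = f x * f y" for x y using f by (simp add: carrier_GG)
  have "(\<lambda>x. f (S x)) \<in> carrier GG"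
    using f by (simp add: carrier_GG lin_compI[OF lf S_lin] S_one S_mult mult.commute)
  moreover have "(\<lambda>x. f (S x)) \<otimes>\<^bsub>GG\<^esub> f = \<one>\<^bsub>GG\<^esub>"
  proof -
    have "swp \<Delta> (\<lambda>u v. f (S u) * f v) x = scA (\<epsilon> x) 1" for x
    proof -
      have "swp \<Delta> (\<lambda>u v. f (S u) * f v) x = f (swp \<Delta> (\<lambda>u v. S u * v) x)"
        by (simp add: swp_lin[OF lf] fm)
      also have "\<dots> = scA (\<epsilon> x) 1" using f by (simp add: antipode_l linD(2)[OF lf] carrier_GG)
      finally show ?thesis .
    qed
    then show ?thesis by (simp add: mult_GG one_GG)
  qed
  ultimately show "\<exists>y\<in>carrier GG. y \<otimes>\<^bsub>GG\<^esub> f = \<one>\<^bsub>GG\<^esub>" by blast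
qed

lemma hom_map:
  assumes B: "coalgebra_hom sc \<Delta> \<epsilon> B" and f: "f \<in> carrier GG" and g: "g \<in> carrier GG"
  shows "char_map B K (f \<otimes>\<^bsub>GG\<^esub> g) = char_map B K f \<otimes>\<^bsub>GD\<^esub> char_map B K g"
proof -
  have lf: "lin sc scA f" and lg: "lin sc scA g" using f g by (auto simp: carrier_GG)
  have lB: "lin sc sc B" by (rule coalg_lin[OF B])
  have b: "bil sc scA (\<lambda>u v. f u * g v)" by (intro lin_intros2 lf lg)
  have b2: "bil sc scA (\<lambda>u v. f (B u) * g (B v))" by (intro lin_intros2 lf lg lin_compI[OF lf lB] lin_compI[OF lg lB])
  have "sum_list (map (\<lambda>(u,v). char_map B K f u * char_map B K g v)
          (SOME xs. set xs \<subseteq> K \<times> K \<and> tensor2_eq sc (\<Delta> x) xs)) = swp \<Delta> (\<lambda>u v. f u * g v) (B x)"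
    if x: "x \<in> K" for x
  proof -
    let ?xs = "SOME xs. set xs \<subseteq> K \<times> K \<and> tensor2_eq sc (\<Delta> x) xs"
    have xs: "set ?xs \<subseteq> K \<times> K \<and> tensor2_eq sc (\<Delta> x) ?xs"
      using H1_coprod[OF x] by (rule someI_ex)
    have "sum_list (map (\<lambda>(u,v). char_map B K f u * char_map B K g v) ?xs)
        = sum_list (map (\<lambda>(u,v). f (B u) * g (B v)) ?xs)"
      using xs by (intro arg_cong[where f=sum_list] map_cong) (auto simp: char_map_def)
    also have "\<dots> = swp \<Delta> (\<lambda>u v. f (B u) * g (B v)) x"
      using transfer2[OF vsH vsA conjunct2[OF xs] b2] by (simp add: swp_def)
    also have "\<dots> = swp \<Delta> (\<lambda>u v. f u * g v) (B x)"
      by (rule coalg_sw[OF B vsA b, symmetric])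
    finally show ?thesis .
  qed
  then show ?thesis
    by (auto simp: char_map_def Char_desc_def Let_def mult_GG intro!: restrict_ext)
qed

lemma one_map:
  assumes B: "coalgebra_hom sc \<Delta> \<epsilon> B"
  shows "char_map B K \<one>\<^bsub>GG\<^esub> = \<one>\<^bsub>GD\<^esub>"
  by (simp add: char_map_def Char_desc_def Let_def one_GG coalg_eps[OF B])

end

theorem mainTheorem12:
  fixes sc :: "'k::field_char_0 \<Rightarrow> 'h::ring_1 \<Rightarrow> 'h"
    and \<Delta> :: "'h \<Rightarrow> ('h \<times> 'h) list" and \<epsilon> :: "'h \<Rightarrow> 'k" and S B1 B2 :: "'h \<Rightarrow> 'h"
    and scA :: "'k \<Rightarrow> 'a::comm_ring_1 \<Rightarrow> 'a"
  assumes "rota_baxter_system sc \<Delta> \<epsilon> S B1 B2"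
    and "comm_algebra scA"
  defines "G \<equiv> Char_H sc \<Delta> \<epsilon> scA"
    and "G' \<equiv> Char_desc sc \<Delta> \<epsilon> S B1 B2 scA"
    and "\<B>1 \<equiv> char_map B1 (H1 \<Delta> S B1 B2)"
    and "\<B>2 \<equiv> char_map B2 (H1 \<Delta> S B1 B2)"
  shows "\<B>1 ` kernel G G' \<B>2 \<lhd> G'\<lparr>carrier := \<B>1 ` carrier G\<rparr>
         \<and> \<B>2 ` kernel G G' \<B>1 \<lhd> G'\<lparr>carrier := \<B>2 ` carrier G\<rparr>"
proof -
  interpret rbs sc \<Delta> \<epsilon> S B1 B2 scA using assms(1,2) by unfold_locales
  have h1: "\<B>1 (x \<otimes>\<^bsub>G\<^esub> y) = \<B>1 x \<otimes>\<^bsub>G'\<^esub> \<B>1 y" if "x \<in> carrier G" "y \<in> carrier G" for x y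
    using hom_map[OF B1h] that unfolding assms(3-6) by blast
  have h2: "\<B>2 (x \<otimes>\<^bsub>G\<^esub> y) = \<B>2 x \<otimes>\<^bsub>G'\<^esub> \<B>2 y" if "x \<in> carrier G" "y \<in> carrier G" for x y
    using hom_map[OF B2h] that unfolding assms(3-6) by blast
  have o1: "\<B>1 \<one>\<^bsub>G\<^esub> = \<one>\<^bsub>G'\<^esub>" using one_map[OF B1h] unfolding assms(3-6) .
  have o2: "\<B>2 \<one>\<^bsub>G\<^esub> = \<one>\<^bsub>G'\<^esub>" using one_map[OF B2h] unfolding assms(3-6) .
  have g: "group G" unfolding assms(3) by (rule group_GG)
  have n1: "\<B>1 ` kernel G G' \<B>2 \<lhd> G'\<lparr>carrier := \<B>1 ` carrier G\<rparr>"
    by (rule abstract_normal[OF g]) (fact h1 o1 h2 o2)+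
  have n2: "\<B>2 ` kernel G G' \<B>1 \<lhd> G'\<lparr>carrier := \<B>2 ` carrier G\<rparr>"
    by (rule abstract_normal[OF g]) (fact h1 o1 h2 o2)+
  show ?thesis using n1 n2 by blast
qed

end
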